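(* Fix $i<j$ and $\varepsilon>0$. Let $\hat T_{ij}\in\mathcal P_m$ and let $T_{ij}$ be generated by: $[T_{ij}]_{p,q}=1-Z_{pq}^2$ if $[\hat T_{ij}]_{p,q}=1$ and $[T_{ij}]_{p,q}=Z_{pq}^2$ if $[\hat T_{ij}]_{p,q}=0$, with $Z_{pq}\sim\mathcal N(0,\eta_{ij})$ independent. If $\eta_{ij}\le\min\!\big(\frac1{10},\frac{1}{4(1+\varepsilon)\ln m+2}\big)$ and $m\ge 2^{1/\varepsilon}$, then with probability at least $1-m^{-2\varepsilon}$, $\hat T_{ij}$ is the unique maximizer of $\operatorname{tr}(P^\top T_{ij})$ over $P\in\mathcal P_m$.
   Context: $\mathcal P_m$ denotes the set of $m\times m$ permutation matrices; $\mathcal N(0,\eta)$ is the Gaussian with mean $0$ and variance $\eta$. *)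

theory Defs
  imports "HOL-Probability.Probability"
begin

text \<open>m x m real matrices are represented as functions nat => nat => real,
  entries with indices p, q < m (indices 0..m-1).\<close>

definition perm_matrices :: "nat \<Rightarrow> (nat \<Rightarrow> nat \<Rightarrow> real) set" where
  "perm_matrices m = {P. (\<forall>p q. P p q \<in> {0, 1})
      \<and> (\<forall>p<m. \<exists>!q. q < m \<and> P p q = 1)
      \<and> (\<forall>q<m. \<exists>!p. p < m \<and> P p q = 1)
      \<and> (\<forall>p q. m \<le> p \<or> m \<le> q \<longrightarrow> P p q = 0)}"

definition trace_PtT :: "nat \<Rightarrow> (nat \<Rightarrow> nat \<Rightarrow> real) \<Rightarrow> (nat \<Rightarrow> nat \<Rightarrow> real) \<Rightarrow> real" where
  "trace_PtT m P T = (\<Sum>p<m. \<Sum>q<m. P p q * T p q)"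

definition noisy_matrix :: "(nat \<Rightarrow> nat \<Rightarrow> real) \<Rightarrow> (nat \<times> nat \<Rightarrow> real) \<Rightarrow> nat \<Rightarrow> nat \<Rightarrow> real" where
  "noisy_matrix That Z p q = (if That p q = 1 then 1 - (Z (p, q))^2 else (Z (p, q))^2)"

text \<open>Independent N(0, eta) entries Z_pq, p, q < m (normal_density takes the standard deviation).\<close>
definition gauss_array :: "nat \<Rightarrow> real \<Rightarrow> (nat \<times> nat \<Rightarrow> real) measure" where
  "gauss_array m \<eta> = PiM ({..<m} \<times> {..<m}) (\<lambda>_. density lborel (normal_density 0 (sqrt \<eta>)))"

definition unique_maximizer :: "nat \<Rightarrow> (nat \<Rightarrow> nat \<Rightarrow> real) \<Rightarrow> (nat \<Rightarrow> nat \<Rightarrow> real) \<Rightarrow> bool" where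
  "unique_maximizer m T P0 \<longleftrightarrow> P0 \<in> perm_matrices m \<and>
     (\<forall>P\<in>perm_matrices m. P \<noteq> P0 \<longrightarrow> trace_PtT m P T < trace_PtT m P0 T)"

end

theory Submission
  imports Defs "HOL-Real_Asymp.Real_Asymp"
begin


lemma nn_integral_even:
  fixes f :: "real \<Rightarrow> ennreal"
  assumes [measurable]: "f \<in> borel_measurable borel" and ev: "\<And>x. f (-x) = f x"
  shows "(\<integral>\<^sup>+x. f x \<partial>lborel) = 2 * (\<integral>\<^sup>+x. f x * indicator {0<..} x \<partial>lborel)"
proof -
  have "(\<integral>\<^sup>+x. f x \<partial>lborel) = (\<integral>\<^sup>+x. f x * indicator {0<..} x + f x * indicator {..<0} x \<partial>lborel)"
    by (intro nn_integral_cong_AE eventually_mono[OF AE_lborel_singleton[of 0]])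
       (auto split: split_indicator)
  also have "\<dots> = (\<integral>\<^sup>+x. f x * indicator {0<..} x \<partial>lborel) + (\<integral>\<^sup>+x. f x * indicator {..<0} x \<partial>lborel)"
    by (rule nn_integral_add) auto
  also have "(\<integral>\<^sup>+x. f x * indicator {..<0} x \<partial>lborel) = (\<integral>\<^sup>+x. f x * indicator {0<..} x \<partial>lborel)"
  proof -
    have "(\<integral>\<^sup>+x. f x * indicator {..<0} x \<partial>lborel) = \<bar>-1::real\<bar> * (\<integral>\<^sup>+x. f (0 + (-1) * x) * indicator {..<0} (0 + (-1) * x) \<partial>lborel)"
      by (rule nn_integral_real_affine) auto
    also have "\<dots> = (\<integral>\<^sup>+x. f x * indicator {0<..} x \<partial>lborel)"
      by (auto simp: ev intro!: nn_integral_cong split: split_indicator)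
    finally show ?thesis .
  qed
  finally show ?thesis by (simp add: mult_2)
qed



definition G :: "real \<Rightarrow> real \<Rightarrow> real" where
  "G k u = k / pi * exp (- k * u) * indicator {1..} u"

lemma inner_x:
  assumes k: "k > 0"
  shows "(\<integral>\<^sup>+x. ennreal (x * G k (x\<^sup>2 * (1 + s\<^sup>2))) * indicator {0<..} x \<partial>lborel)
       = ennreal (exp (- k) / (2 * pi * (1 + s\<^sup>2)))"
proof -
  define K where "K = k * (1 + s\<^sup>2)"
  define a where "a = 1 / sqrt (1 + s\<^sup>2)"
  have s1: "1 + s\<^sup>2 > 0" by (simp add: add_pos_nonneg)
  have Kpos: "K > 0" using k s1 by (simp add: K_def)
  have apos: "a > 0" using s1 by (simp add: a_def)
  have asq: "a\<^sup>2 * (1 + s\<^sup>2) = 1" using s1 by (simp add: a_def power_divide)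
  have equiv: "x\<^sup>2 * (1 + s\<^sup>2) \<ge> 1 \<longleftrightarrow> x \<ge> a" if "x > 0" for x
  proof -
    have "x\<^sup>2 * (1 + s\<^sup>2) \<ge> 1 \<longleftrightarrow> x\<^sup>2 * (1 + s\<^sup>2) \<ge> a\<^sup>2 * (1 + s\<^sup>2)" using asq by simp
    also have "\<dots> \<longleftrightarrow> x\<^sup>2 \<ge> a\<^sup>2" using s1 by simp
    also have "\<dots> \<longleftrightarrow> x \<ge> a" using that apos by (simp add: power_mono_iff)
    finally show ?thesis .
  qed
  have "(\<integral>\<^sup>+x. ennreal (x * G k (x\<^sup>2 * (1 + s\<^sup>2))) * indicator {0<..} x \<partial>lborel)
      = (\<integral>\<^sup>+x. ennreal (k / pi * x * exp (- K * x\<^sup>2)) * indicator {a..} x \<partial>lborel)"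
  proof (intro nn_integral_cong)
    fix x :: real
    show "ennreal (x * G k (x\<^sup>2 * (1 + s\<^sup>2))) * indicator {0<..} x
        = ennreal (k / pi * x * exp (- K * x\<^sup>2)) * indicator {a..} x"
    proof (cases "x > 0")
      case True
      then show ?thesis using equiv[OF True]
        by (auto simp: G_def K_def indicator_def algebra_simps)
    next
      case False
      then show ?thesis using apos by (auto simp: indicator_def)
    qed
  qed
  also have "\<dots> = ennreal (0 - (- (k / pi) / (2 * K) * exp (- K * a\<^sup>2)))"
  proof (rule nn_integral_FTC_atLeast)
    show "(\<lambda>x. k / pi * x * exp (- K * x\<^sup>2)) \<in> borel_measurable borel" by measurable
    fix x :: real assume "a \<le> x"
    then have "x > 0" using apos by simp
    then show "0 \<le> k / pi * x * exp (- K * x\<^sup>2)" using k by simp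
    show "((\<lambda>x. - (k / pi) / (2 * K) * exp (- K * x\<^sup>2)) has_real_derivative k / pi * x * exp (- K * x\<^sup>2)) (at x)"
      using Kpos by (auto intro!: derivative_eq_intros simp: field_simps)
  next
    have "((\<lambda>x. exp (- K * x\<^sup>2)) \<longlongrightarrow> 0) at_top"
      using Kpos by real_asymp
    then show "((\<lambda>x. - (k / pi) / (2 * K) * exp (- K * x\<^sup>2)) \<longlongrightarrow> 0) at_top"
      using tendsto_mult_right_zero by blast
  qed
  also have "0 - (- (k / pi) / (2 * K) * exp (- K * a\<^sup>2)) = exp (- k) / (2 * pi * (1 + s\<^sup>2))"
  proof -
    have "K * a\<^sup>2 = k * (a\<^sup>2 * (1 + s\<^sup>2))" by (simp add: K_def algebra_simps)
    then have "K * a\<^sup>2 = k" using asq by simp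
    then have e: "exp (- K * a\<^sup>2) = exp (- k)" by simp
    have "k / pi / (2 * K) = 1 / (2 * pi * (1 + s\<^sup>2))"
      using k s1 by (simp add: K_def)
    then show ?thesis unfolding e by (simp add: field_simps)
  qed
  finally show ?thesis .
qed



lemma G_measurable[measurable]: "(\<lambda>u. G k u) \<in> borel_measurable borel"
  unfolding G_def by measurable

lemma G_nonneg: "k > 0 \<Longrightarrow> G k u \<ge> 0"
  by (simp add: G_def)

lemma outer_s:
  assumes k: "k > 0"
  shows "(\<integral>\<^sup>+s. ennreal (exp (- k) / (2 * pi * (1 + s\<^sup>2))) * indicator {0<..} s \<partial>lborel)
       = ennreal (exp (- k) / 4)"
proof -
  have "(\<integral>\<^sup>+s. ennreal (exp (- k) / (2 * pi * (1 + s\<^sup>2))) * indicator {0<..} s \<partial>lborel)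
      = (\<integral>\<^sup>+s. ennreal (exp (- k) / (2 * pi * (1 + s\<^sup>2))) * indicator {0..} s \<partial>lborel)"
    by (intro nn_integral_cong_AE eventually_mono[OF AE_lborel_singleton[of 0]])
       (auto split: split_indicator)
  also have "\<dots> = ennreal (exp (- k) / (2 * pi) * (pi / 2) - exp (- k) / (2 * pi) * arctan 0)"
  proof (rule nn_integral_FTC_atLeast)
    show "(\<lambda>s. exp (- k) / (2 * pi * (1 + s\<^sup>2))) \<in> borel_measurable borel" by measurable
    fix x :: real
    show "0 \<le> exp (- k) / (2 * pi * (1 + x\<^sup>2))" by (simp add: add_pos_nonneg)
    show "((\<lambda>s. exp (- k) / (2 * pi) * arctan s) has_real_derivative exp (- k) / (2 * pi * (1 + x\<^sup>2))) (at x)"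
    proof -
      have "(arctan has_real_derivative 1 / (1 + x\<^sup>2)) (at x)"
        using DERIV_arctan[of x] by (simp add: power2_eq_square divide_inverse)
      from DERIV_cmult[OF this, of "exp (- k) / (2 * pi)"]
      show ?thesis by (simp add: field_simps)
    qed
  next
    show "((\<lambda>s. exp (- k) / (2 * pi) * arctan s) \<longlongrightarrow> exp (- k) / (2 * pi) * (pi / 2)) at_top"
      by (intro tendsto_intros tendsto_arctan_at_top)
  qed
  also have "exp (- k) / (2 * pi) * (pi / 2) - exp (- k) / (2 * pi) * arctan 0 = exp (- k) / 4"
    by simp
  finally show ?thesis .
qed

lemma core:
  assumes k: "k > 0"
  shows "(\<integral>\<^sup>+x. \<integral>\<^sup>+y. ennreal (G k (x\<^sup>2 + y\<^sup>2)) \<partial>lborel \<partial>lborel) = ennreal (exp (- k))"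
proof -
  define H where "H x = (\<integral>\<^sup>+y. ennreal (G k (x\<^sup>2 + y\<^sup>2)) * indicator {0<..} y \<partial>lborel)" for x
  have Hm[measurable]: "H \<in> borel_measurable borel"
    unfolding H_def by measurable
  have "(\<integral>\<^sup>+x. \<integral>\<^sup>+y. ennreal (G k (x\<^sup>2 + y\<^sup>2)) \<partial>lborel \<partial>lborel) = (\<integral>\<^sup>+x. 2 * H x \<partial>lborel)"
    unfolding H_def by (intro nn_integral_cong nn_integral_even) auto
  also have "\<dots> = 2 * (\<integral>\<^sup>+x. H x \<partial>lborel)"
    by (rule nn_integral_cmult) auto
  also have "(\<integral>\<^sup>+x. H x \<partial>lborel) = 2 * (\<integral>\<^sup>+x. H x * indicator {0<..} x \<partial>lborel)"
    by (rule nn_integral_even) (auto simp: H_def)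
  also have "(\<integral>\<^sup>+x. H x * indicator {0<..} x \<partial>lborel)
     = (\<integral>\<^sup>+x. \<integral>\<^sup>+s. ennreal (x * G k (x\<^sup>2 * (1 + s\<^sup>2))) * indicator {0<..} s * indicator {0<..} x \<partial>lborel \<partial>lborel)"
  proof (intro nn_integral_cong)
    fix x :: real
    show "H x * indicator {0<..} x = (\<integral>\<^sup>+s. ennreal (x * G k (x\<^sup>2 * (1 + s\<^sup>2))) * indicator {0<..} s * indicator {0<..} x \<partial>lborel)"
    proof (cases "x > 0")
      case True
      have "H x = ennreal \<bar>x\<bar> * (\<integral>\<^sup>+s. ennreal (G k (x\<^sup>2 + (0 + x * s)\<^sup>2)) * indicator {0<..} (0 + x * s) \<partial>lborel)"
        unfolding H_def using True by (intro nn_integral_real_affine) auto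
      also have "\<dots> = (\<integral>\<^sup>+s. ennreal x * (ennreal (G k (x\<^sup>2 + (0 + x * s)\<^sup>2)) * indicator {0<..} (0 + x * s)) \<partial>lborel)"
        using True by (subst nn_integral_cmult) auto
      also have "\<dots> = (\<integral>\<^sup>+s. ennreal (x * G k (x\<^sup>2 * (1 + s\<^sup>2))) * indicator {0<..} s \<partial>lborel)"
      proof (intro nn_integral_cong)
        fix s :: real
        have e: "x\<^sup>2 + (0 + x * s)\<^sup>2 = x\<^sup>2 * (1 + s\<^sup>2)" by (simp add: algebra_simps power2_eq_square)
        have i: "indicator {0<..} (0 + x * s) = (indicator {0<..} s :: ennreal)"
          using True by (simp add: indicator_def zero_less_mult_iff)
        show "ennreal x * (ennreal (G k (x\<^sup>2 + (0 + x * s)\<^sup>2)) * indicator {0<..} (0 + x * s))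
            = ennreal (x * G k (x\<^sup>2 * (1 + s\<^sup>2))) * indicator {0<..} s"
          unfolding e i using True G_nonneg[OF k] by (simp add: ennreal_mult mult.assoc)
      qed
      finally show ?thesis using True by simp
    next
      case False
      then show ?thesis by simp
    qed
  qed
  also have "\<dots> = (\<integral>\<^sup>+s. \<integral>\<^sup>+x. ennreal (x * G k (x\<^sup>2 * (1 + s\<^sup>2))) * indicator {0<..} s * indicator {0<..} x \<partial>lborel \<partial>lborel)"
    by (rule lborel_pair.Fubini') measurable
  also have "\<dots> = (\<integral>\<^sup>+s. ennreal (exp (- k) / (2 * pi * (1 + s\<^sup>2))) * indicator {0<..} s \<partial>lborel)"
  proof (intro nn_integral_cong)
    fix s :: real
    have "(\<integral>\<^sup>+x. ennreal (x * G k (x\<^sup>2 * (1 + s\<^sup>2))) * indicator {0<..} s * indicator {0<..} x \<partial>lborel)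
        = (\<integral>\<^sup>+x. indicator {0<..} s * (ennreal (x * G k (x\<^sup>2 * (1 + s\<^sup>2))) * indicator {0<..} x) \<partial>lborel)"
      by (intro nn_integral_cong) (simp add: ac_simps)
    also have "\<dots> = indicator {0<..} s * (\<integral>\<^sup>+x. ennreal (x * G k (x\<^sup>2 * (1 + s\<^sup>2))) * indicator {0<..} x \<partial>lborel)"
      by (rule nn_integral_cmult) measurable
    also have "\<dots> = ennreal (exp (- k) / (2 * pi * (1 + s\<^sup>2))) * indicator {0<..} s"
      using inner_x[OF k, of s] by (simp add: ac_simps)
    finally show "(\<integral>\<^sup>+x. ennreal (x * G k (x\<^sup>2 * (1 + s\<^sup>2))) * indicator {0<..} s * indicator {0<..} x \<partial>lborel)
        = ennreal (exp (- k) / (2 * pi * (1 + s\<^sup>2))) * indicator {0<..} s" .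
  qed
  also have "\<dots> = ennreal (exp (- k) / 4)" by (rule outer_s[OF k])
  finally have "(\<integral>\<^sup>+x. \<integral>\<^sup>+y. ennreal (G k (x\<^sup>2 + y\<^sup>2)) \<partial>lborel \<partial>lborel) = 2 * (2 * ennreal (exp (- k) / 4))" .
  also have "\<dots> = ennreal (exp (- k))"
  proof -
    have "ennreal (4 * (exp (- k) / 4)) = ennreal 4 * ennreal (exp (- k) / 4)"
      by (rule ennreal_mult) auto
    then show ?thesis by simp
  qed
  finally show ?thesis .
qed



abbreviation NN :: "real \<Rightarrow> real measure" where
  "NN \<eta> \<equiv> density lborel (normal_density 0 (sqrt \<eta>))"

lemma prob_NN: "\<eta> > 0 \<Longrightarrow> prob_space (NN \<eta>)"
  by (rule prob_space_normal_density) simp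

lemma pair_tail:
  assumes eta: "\<eta> > 0"
  shows "emeasure (NN \<eta> \<Otimes>\<^sub>M NN \<eta>) {p \<in> space (NN \<eta> \<Otimes>\<^sub>M NN \<eta>). 1 \<le> (fst p)\<^sup>2 + (snd p)\<^sup>2}
       = ennreal (exp (- (1 / (2 * \<eta>))))"
proof -
  define k where "k = 1 / (2 * \<eta>)"
  have k: "k > 0" using eta by (simp add: k_def)
  let ?A = "{p \<in> space (NN \<eta> \<Otimes>\<^sub>M NN \<eta>). 1 \<le> (fst p)\<^sup>2 + (snd p)\<^sup>2}"
  let ?phi = "normal_density 0 (sqrt \<eta>)"
  have Am: "?A \<in> sets (NN \<eta> \<Otimes>\<^sub>M NN \<eta>)" by measurable
  interpret sf: sigma_finite_measure "NN \<eta>"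
    using prob_NN[OF eta] by (simp add: prob_space_imp_sigma_finite)
  have phi: "?phi x * ?phi y = G k (x\<^sup>2 + y\<^sup>2)" if "1 \<le> x\<^sup>2 + y\<^sup>2" for x y
  proof -
    have "?phi x * ?phi y = (1 / sqrt (2 * pi * \<eta>)) * (1 / sqrt (2 * pi * \<eta>)) * (exp (- x\<^sup>2 / (2 * \<eta>)) * exp (- y\<^sup>2 / (2 * \<eta>)))"
      using eta by (simp add: normal_density_def)
    also have "\<dots> = 1 / (2 * pi * \<eta>) * exp (- k * (x\<^sup>2 + y\<^sup>2))"
    proof -
      have "- x\<^sup>2 / (2 * \<eta>) + - y\<^sup>2 / (2 * \<eta>) = - k * (x\<^sup>2 + y\<^sup>2)"
        using eta by (simp add: k_def field_simps)
      then have "exp (- x\<^sup>2 / (2 * \<eta>)) * exp (- y\<^sup>2 / (2 * \<eta>)) = exp (- k * (x\<^sup>2 + y\<^sup>2))"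
        by (simp add: mult_exp_exp)
      moreover have "(1 / sqrt (2 * pi * \<eta>)) * (1 / sqrt (2 * pi * \<eta>)) = 1 / (2 * pi * \<eta>)"
        using eta by (simp flip: power2_eq_square add: power_divide)
      ultimately show ?thesis by simp
    qed
    also have "\<dots> = G k (x\<^sup>2 + y\<^sup>2)"
      using that eta by (simp add: G_def k_def)
    finally show ?thesis .
  qed
  have "emeasure (NN \<eta> \<Otimes>\<^sub>M NN \<eta>) ?A = (\<integral>\<^sup>+x. emeasure (NN \<eta>) (Pair x -` ?A) \<partial>NN \<eta>)"
    by (rule sf.emeasure_pair_measure_alt[OF Am])
  also have "\<dots> = (\<integral>\<^sup>+x. ?phi x * emeasure (NN \<eta>) (Pair x -` ?A) \<partial>lborel)"
    by (rule nn_integral_density) (auto intro!: sf.measurable_emeasure_Pair Am)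
  also have "\<dots> = (\<integral>\<^sup>+x. \<integral>\<^sup>+y. ennreal (G k (x\<^sup>2 + y\<^sup>2)) \<partial>lborel \<partial>lborel)"
  proof (intro nn_integral_cong)
    fix x :: real
    have "emeasure (NN \<eta>) (Pair x -` ?A) = (\<integral>\<^sup>+y. ennreal (?phi y) * indicator (Pair x -` ?A) y \<partial>lborel)"
      by (rule emeasure_density) (auto intro!: sets_Pair1[OF Am] simp: sets_pair_measure)
    then have "ennreal (?phi x) * emeasure (NN \<eta>) (Pair x -` ?A)
       = (\<integral>\<^sup>+y. ennreal (?phi x) * (ennreal (?phi y) * indicator (Pair x -` ?A) y) \<partial>lborel)"
      by (simp add: nn_integral_cmult)
    also have "\<dots> = (\<integral>\<^sup>+y. ennreal (G k (x\<^sup>2 + y\<^sup>2)) \<partial>lborel)"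
    proof (intro nn_integral_cong)
      fix y :: real
      show "ennreal (?phi x) * (ennreal (?phi y) * indicator (Pair x -` ?A) y) = ennreal (G k (x\<^sup>2 + y\<^sup>2))"
      proof (cases "1 \<le> x\<^sup>2 + y\<^sup>2")
        case True
        then show ?thesis using phi[OF True]
          by (simp add: space_pair_measure ennreal_mult[symmetric])
      next
        case False
        then show ?thesis by (simp add: space_pair_measure G_def)
      qed
    qed
    finally show "ennreal (?phi x) * emeasure (NN \<eta>) (Pair x -` ?A) = (\<integral>\<^sup>+y. ennreal (G k (x\<^sup>2 + y\<^sup>2)) \<partial>lborel)" .
  qed
  also have "\<dots> = ennreal (exp (- k))" by (rule core[OF k])
  finally show ?thesis by (simp add: k_def)
qed



lemma pair_prob:
  assumes eta: "\<eta> > 0" and ab: "a \<in> I" "b \<in> I" "a \<noteq> b"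
  shows "measure (PiM I (\<lambda>_. NN \<eta>)) {Z \<in> space (PiM I (\<lambda>_. NN \<eta>)). 1 \<le> (Z a)\<^sup>2 + (Z b)\<^sup>2}
       = exp (- (1 / (2 * \<eta>)))"
proof -
  let ?M = "PiM I (\<lambda>_. NN \<eta>)"
  let ?P = "PiM (UNIV :: bool set) (\<lambda>_. NN \<eta>)"
  define f where "f = (\<lambda>x::bool. if x then a else b)"
  let ?t = "\<lambda>\<omega>. \<lambda>n\<in>(UNIV :: bool set). \<omega> (f n)"
  let ?g = "\<lambda>x :: bool \<Rightarrow> real. (x True, x False)"
  have inj: "inj_on f UNIV" using ab by (auto simp: f_def inj_on_def split: if_splits)
  have fI: "f \<in> UNIV \<rightarrow> I" using ab by (auto simp: f_def)
  have 1: "distr ?M ?P ?t = ?P"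
    using distr_PiM_reindex[of I "\<lambda>_. NN \<eta>" f UNIV] prob_NN[OF eta] inj fI by simp
  have sf: "sigma_finite_measure (NN \<eta>)"
    using prob_NN[OF eta] by (simp add: prob_space_imp_sigma_finite)
  have cb: "case_bool (NN \<eta>) (NN \<eta>) = (\<lambda>_. NN \<eta>)"
    by (rule ext) (simp split: bool.split)
  have 2: "NN \<eta> \<Otimes>\<^sub>M NN \<eta> = distr ?P (NN \<eta> \<Otimes>\<^sub>M NN \<eta>) ?g"
    using pair_measure_eq_distr_PiM[OF sf sf] unfolding cb .
  have tm: "?t \<in> measurable ?M ?P"
    using fI by (intro measurable_restrict measurable_component_singleton) auto
  have gm: "?g \<in> measurable ?P (NN \<eta> \<Otimes>\<^sub>M NN \<eta>)"
    by measurable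
  have 3: "distr ?M (NN \<eta> \<Otimes>\<^sub>M NN \<eta>) (\<lambda>\<omega>. (\<omega> a, \<omega> b)) = NN \<eta> \<Otimes>\<^sub>M NN \<eta>"
  proof -
    have "distr ?M (NN \<eta> \<Otimes>\<^sub>M NN \<eta>) (\<lambda>\<omega>. (\<omega> a, \<omega> b)) = distr ?M (NN \<eta> \<Otimes>\<^sub>M NN \<eta>) (?g \<circ> ?t)"
      by (simp add: f_def comp_def)
    also have "\<dots> = distr (distr ?M ?P ?t) (NN \<eta> \<Otimes>\<^sub>M NN \<eta>) ?g"
      by (rule distr_distr[symmetric, OF gm tm])
    also have "\<dots> = NN \<eta> \<Otimes>\<^sub>M NN \<eta>" using 1 2 by simp
    finally show ?thesis .
  qed
  let ?A = "{p \<in> space (NN \<eta> \<Otimes>\<^sub>M NN \<eta>). 1 \<le> (fst p)\<^sup>2 + (snd p)\<^sup>2}"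
  have hm: "(\<lambda>\<omega>. (\<omega> a, \<omega> b)) \<in> measurable ?M (NN \<eta> \<Otimes>\<^sub>M NN \<eta>)"
    using ab by (intro measurable_Pair measurable_component_singleton) auto
  have Am: "?A \<in> sets (NN \<eta> \<Otimes>\<^sub>M NN \<eta>)" by measurable
  have "measure (NN \<eta> \<Otimes>\<^sub>M NN \<eta>) ?A = measure (distr ?M (NN \<eta> \<Otimes>\<^sub>M NN \<eta>) (\<lambda>\<omega>. (\<omega> a, \<omega> b))) ?A"
    using 3 by simp
  also have "\<dots> = measure ?M ((\<lambda>\<omega>. (\<omega> a, \<omega> b)) -` ?A \<inter> space ?M)"
    by (rule measure_distr[OF hm Am])
  also have "(\<lambda>\<omega>. (\<omega> a, \<omega> b)) -` ?A \<inter> space ?M = {Z \<in> space ?M. 1 \<le> (Z a)\<^sup>2 + (Z b)\<^sup>2}"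
    by (auto simp: space_pair_measure)
  finally have "measure ?M {Z \<in> space ?M. 1 \<le> (Z a)\<^sup>2 + (Z b)\<^sup>2} = measure (NN \<eta> \<Otimes>\<^sub>M NN \<eta>) ?A" ..
  also have "\<dots> = exp (- (1 / (2 * \<eta>)))"
    unfolding measure_def pair_tail[OF eta] by simp
  finally show ?thesis .
qed



lemma perm_entry:
  assumes P: "P \<in> perm_matrices m" and "p < m" "q0 < m" "P p q0 = 1" "q < m"
  shows "P p q = (if q = q0 then 1 else 0)"
proof -
  have "P p q \<in> {0,1}" "\<exists>!q. q < m \<and> P p q = 1" using P assms by (auto simp: perm_matrices_def)
  then show ?thesis using assms by auto
qed

lemma perm_out: "P \<in> perm_matrices m \<Longrightarrow> m \<le> p \<or> m \<le> q \<Longrightarrow> P p q = 0"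
  by (auto simp: perm_matrices_def)

lemma perm_row: "P \<in> perm_matrices m \<Longrightarrow> p < m \<Longrightarrow> \<exists>q<m. P p q = 1"
  unfolding perm_matrices_def by blast

lemma row_sum:
  assumes P: "P \<in> perm_matrices m" and "p < m" "q0 < m" "P p q0 = 1"
  shows "(\<Sum>q<m. P p q * T p q) = T p q0"
proof -
  have "(\<Sum>q<m. P p q * T p q) = (\<Sum>q<m. if q = q0 then T p q else 0)"
    by (intro sum.cong refl) (simp add: perm_entry[OF assms])
  also have "\<dots> = T p q0" using assms by simp
  finally show ?thesis .
qed

lemma det:
  assumes That: "That \<in> perm_matrices m"
    and s0: "\<And>p. p < m \<Longrightarrow> s0 p < m \<and> That p (s0 p) = 1"
    and good: "\<forall>p<m. \<forall>q<m. q \<noteq> s0 p \<longrightarrow> (Z (p, s0 p))\<^sup>2 + (Z (p, q))\<^sup>2 < 1"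
  shows "unique_maximizer m (noisy_matrix That Z) That"
  unfolding unique_maximizer_def
proof (intro conjI ballI impI That)
  fix P assume P: "P \<in> perm_matrices m" and ne: "P \<noteq> That"
  let ?T = "noisy_matrix That Z"
  define t where "t p = (SOME q. q < m \<and> P p q = 1)" for p
  have t: "t p < m \<and> P p (t p) = 1" if "p < m" for p
    unfolding t_def using perm_row[OF P that] by (rule someI_ex)
  have tr1: "trace_PtT m P ?T = (\<Sum>p<m. ?T p (t p))"
    unfolding trace_PtT_def by (intro sum.cong refl row_sum[OF P]) (auto simp: t)
  have tr0: "trace_PtT m That ?T = (\<Sum>p<m. ?T p (s0 p))"
    unfolding trace_PtT_def by (intro sum.cong refl row_sum[OF That]) (auto simp: s0)
  have le: "?T p (t p) \<le> ?T p (s0 p)" and lt: "t p \<noteq> s0 p \<Longrightarrow> ?T p (t p) < ?T p (s0 p)" if "p < m" for p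
  proof -
    have T0: "?T p (s0 p) = 1 - (Z (p, s0 p))\<^sup>2" using s0[OF that] by (simp add: noisy_matrix_def)
    show "t p \<noteq> s0 p \<Longrightarrow> ?T p (t p) < ?T p (s0 p)"
    proof -
      assume d: "t p \<noteq> s0 p"
      have "That p (t p) = 0" using perm_entry[OF That that _ _ , of "s0 p" "t p"] s0[OF that] t[OF that] d by simp
      then have "?T p (t p) = (Z (p, t p))\<^sup>2" by (simp add: noisy_matrix_def)
      then show ?thesis using T0 good that t[OF that] d by force
    qed
    then show "?T p (t p) \<le> ?T p (s0 p)" by (cases "t p = s0 p") force+
  qed
  have "\<exists>p<m. t p \<noteq> s0 p"
  proof (rule ccontr)
    assume "\<not> ?thesis"
    then have eq: "\<And>p. p < m \<Longrightarrow> t p = s0 p" by auto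
    have "P = That"
    proof (intro ext)
      fix p q
      show "P p q = That p q"
      proof (cases "p < m \<and> q < m")
        case True
        then show ?thesis
          using perm_entry[OF P _ _ _ , of p "t p" q] perm_entry[OF That _ _ _ , of p "s0 p" q] t s0 eq by auto
      next
        case False
        then show ?thesis using perm_out[OF P] perm_out[OF That] by auto
      qed
    qed
    then show False using ne by simp
  qed
  then obtain p0 where p0: "p0 < m" "t p0 \<noteq> s0 p0" by auto
  have "(\<Sum>p<m. ?T p (t p)) < (\<Sum>p<m. ?T p (s0 p))"
    by (rule sum_strict_mono_ex1) (use le lt p0 in auto)
  then show "trace_PtT m P ?T < trace_PtT m That ?T" using tr0 tr1 by simp
qed

lemma finite_perm: "finite (perm_matrices m)"
proof -
  let ?I = "{..<m} \<times> {..<m}"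
  let ?h = "\<lambda>f :: nat \<times> nat \<Rightarrow> real. \<lambda>p q. if p < m \<and> q < m then f (p, q) else 0"
  have "perm_matrices m \<subseteq> ?h ` (?I \<rightarrow>\<^sub>E {0, 1})"
  proof
    fix P assume P: "P \<in> perm_matrices m"
    have "P = ?h (restrict (\<lambda>(p, q). P p q) ?I)"
      using perm_out[OF P] by (auto intro!: ext)
    moreover have "restrict (\<lambda>(p, q). P p q) ?I \<in> ?I \<rightarrow>\<^sub>E {0, 1}"
      using P by (auto simp: perm_matrices_def)
    ultimately show "P \<in> ?h ` (?I \<rightarrow>\<^sub>E {0, 1})" by blast
  qed
  moreover have "finite (?h ` (?I \<rightarrow>\<^sub>E {0, 1}))"
    by (intro finite_imageI finite_PiE) auto
  ultimately show ?thesis by (rule finite_subset)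
qed



lemma Zpq_meas:
  assumes "p < m" "q < m"
  shows "(\<lambda>Z. Z (p, q)) \<in> borel_measurable (gauss_array m \<eta>)"
proof -
  have "(\<lambda>Z. Z (p, q)) \<in> measurable (gauss_array m \<eta>) (NN \<eta>)"
    unfolding gauss_array_def using assms by (intro measurable_component_singleton) auto
  then show ?thesis by simp
qed

lemma entry_meas:
  assumes "p < m" "q < m"
  shows "(\<lambda>Z. noisy_matrix That Z p q) \<in> borel_measurable (gauss_array m \<eta>)"
proof (cases "That p q = 1")
  case True
  then show ?thesis unfolding noisy_matrix_def using Zpq_meas[OF assms] by simp
next
  case False
  then show ?thesis unfolding noisy_matrix_def using Zpq_meas[OF assms] by simp
qed

lemma trace_meas:
  "(\<lambda>Z. trace_PtT m P (noisy_matrix That Z)) \<in> borel_measurable (gauss_array m \<eta>)"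
  unfolding trace_PtT_def
  by (intro borel_measurable_sum borel_measurable_times borel_measurable_const) (auto intro: entry_meas)



lemma arith_bound:
  fixes m :: nat
  assumes eps: "\<epsilon> > 0" and eta: "\<eta> > 0" and le: "\<eta> \<le> 1 / (4 * (1 + \<epsilon>) * ln (real m) + 2)"
    and m: "m \<ge> 1"
  shows "real m ^ 2 * exp (- (1 / (2 * \<eta>))) \<le> real m powr (- 2 * \<epsilon>)"
proof -
  define L where "L = ln (real m)"
  have L0: "L \<ge> 0" using m by (simp add: L_def)
  define D where "D = 4 * (1 + \<epsilon>) * L + 2"
  have "4 * (1 + \<epsilon>) * L \<ge> 0" using L0 eps by simp
  then have D0: "D > 0" by (simp add: D_def)
  have Dle: "1 / \<eta> \<ge> D"
  proof -
    have "\<eta> * D \<le> 1" using le D0 by (simp add: D_def L_def field_simps)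
    then show ?thesis using eta by (simp add: field_simps)
  qed
  have h: "1 / (2 * \<eta>) = (1 / \<eta>) / 2" by simp
  have "1 / (2 * \<eta>) \<ge> 2 * (1 + \<epsilon>) * L + 1" using h Dle unfolding D_def by linarith
  then have "exp (- (1 / (2 * \<eta>))) \<le> exp (- (2 * (1 + \<epsilon>) * L))" by simp
  moreover have "real m ^ 2 = exp (2 * L)"
    using m by (simp add: L_def exp_double)
  ultimately have "real m ^ 2 * exp (- (1 / (2 * \<eta>))) \<le> exp (2 * L) * exp (- (2 * (1 + \<epsilon>) * L))"
    by simp
  also have "\<dots> = exp (2 * L + - (2 * (1 + \<epsilon>) * L))" by (rule mult_exp_exp)
  also have "\<dots> = exp (- 2 * \<epsilon> * L)" by (simp add: algebra_simps)
  also have "\<dots> = real m powr (- 2 * \<epsilon>)" using m by (simp add: powr_def L_def)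
  finally show ?thesis .
qed



theorem mainTheorem4:
  fixes m :: nat and \<eta> \<epsilon> :: real and That :: "nat \<Rightarrow> nat \<Rightarrow> real"
  assumes "\<epsilon> > 0"
    and "That \<in> perm_matrices m"
    and "\<eta> > 0"
    and "\<eta> \<le> min (1/10) (1 / (4 * (1 + \<epsilon>) * ln (real m) + 2))"
    and "real m \<ge> 2 powr (1 / \<epsilon>)"
  shows "measure (gauss_array m \<eta>)
           {Z \<in> space (gauss_array m \<eta>). unique_maximizer m (noisy_matrix That Z) That}
         \<ge> 1 - real m powr (- 2 * \<epsilon>)"
proof -
  note eps = assms(1) and That = assms(2) and eta = assms(3)
  let ?M = "gauss_array m \<eta>"
  let ?S = "space ?M"
  let ?I = "{..<m} \<times> {..<m}"
  interpret P: prob_space ?M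
    unfolding gauss_array_def using prob_NN[OF eta] by (intro prob_space_PiM) auto
  have m1: "m \<ge> 1"
  proof -
    have "(0::real) < 2 powr (1 / \<epsilon>)" by simp
    then have "real m > 0" using assms(5) by linarith
    then show ?thesis by simp
  qed
  define s0 where "s0 p = (THE q. q < m \<and> That p q = 1)" for p
  have s0: "s0 p < m \<and> That p (s0 p) = 1" if "p < m" for p
  proof -
    have "\<exists>!q. q < m \<and> That p q = 1" using That that by (auto simp: perm_matrices_def)
    then show ?thesis unfolding s0_def by (rule theI')
  qed
  define B where "B pq = (if snd pq = s0 (fst pq) then {}
      else {Z \<in> ?S. 1 \<le> (Z (fst pq, s0 (fst pq)))\<^sup>2 + (Z pq)\<^sup>2})" for pq
  have Bm: "B pq \<in> sets ?M" and Bp: "measure ?M (B pq) \<le> exp (- (1 / (2 * \<eta>)))"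
    if pqI: "pq \<in> ?I" for pq
  proof -
    obtain p q where pq: "pq = (p, q)" "p < m" "q < m" using pqI by (cases pq) auto
    have "B pq \<in> sets ?M \<and> measure ?M (B pq) \<le> exp (- (1 / (2 * \<eta>)))"
    proof (cases "q = s0 p")
      case True
      then show ?thesis by (simp add: B_def pq)
    next
      case False
      have B: "B pq = {Z \<in> ?S. 1 \<le> (Z (p, s0 p))\<^sup>2 + (Z (p, q))\<^sup>2}"
        using False by (simp add: B_def pq)
      have "(\<lambda>Z. (Z (p, s0 p))\<^sup>2 + (Z (p, q))\<^sup>2) \<in> borel_measurable ?M"
        using Zpq_meas[of p m "s0 p" \<eta>] Zpq_meas[of p m q \<eta>] pq s0[of p] by simp
      then have "B pq \<in> sets ?M" unfolding B by measurable
      moreover have "measure ?M (B pq) = exp (- (1 / (2 * \<eta>)))"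
        unfolding B gauss_array_def
        by (rule pair_prob[OF eta]) (use pq s0[of p] False in auto)
      ultimately show ?thesis by simp
    qed
    then show "B pq \<in> sets ?M" "measure ?M (B pq) \<le> exp (- (1 / (2 * \<eta>)))" by auto
  qed
  define E where "E = ?S - (\<Union>pq\<in>?I. B pq)"
  have Um: "(\<Union>pq\<in>?I. B pq) \<in> sets ?M" using Bm by auto
  have Gm: "{Z \<in> ?S. unique_maximizer m (noisy_matrix That Z) That} \<in> sets ?M"
  proof -
    have "Measurable.pred ?M (\<lambda>Z. \<forall>P\<in>perm_matrices m. P \<noteq> That \<longrightarrow>
        trace_PtT m P (noisy_matrix That Z) < trace_PtT m That (noisy_matrix That Z))"
    proof (rule pred_intros_finite(3)[OF finite_perm])
      fix P
      show "Measurable.pred ?M (\<lambda>Z. P \<noteq> That \<longrightarrow>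
        trace_PtT m P (noisy_matrix That Z) < trace_PtT m That (noisy_matrix That Z))"
        using trace_meas[of m P That \<eta>] trace_meas[of m That That \<eta>]
        by (cases "P = That") auto
    qed
    then show ?thesis using That by (simp add: unique_maximizer_def pred_def)
  qed
  have EG: "E \<subseteq> {Z \<in> ?S. unique_maximizer m (noisy_matrix That Z) That}"
  proof
    fix Z assume Z: "Z \<in> E"
    have "\<forall>p<m. \<forall>q<m. q \<noteq> s0 p \<longrightarrow> (Z (p, s0 p))\<^sup>2 + (Z (p, q))\<^sup>2 < 1"
    proof (intro allI impI)
      fix p q assume pq: "p < m" "q < m" "q \<noteq> s0 p"
      have "Z \<notin> B (p, q)" using Z pq by (auto simp: E_def)
      then show "(Z (p, s0 p))\<^sup>2 + (Z (p, q))\<^sup>2 < 1" using Z pq by (auto simp: B_def E_def)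
    qed
    then show "Z \<in> {Z \<in> ?S. unique_maximizer m (noisy_matrix That Z) That}"
      using Z det[OF That s0] by (auto simp: E_def)
  qed
  have "measure ?M (\<Union>pq\<in>?I. B pq) \<le> (\<Sum>pq\<in>?I. measure ?M (B pq))"
    by (rule P.finite_measure_subadditive_finite) (use Bm in auto)
  also have "\<dots> \<le> (\<Sum>pq\<in>?I. exp (- (1 / (2 * \<eta>))))"
    by (rule sum_mono) (rule Bp)
  also have "\<dots> = real m ^ 2 * exp (- (1 / (2 * \<eta>)))"
    by (simp add: power2_eq_square)
  also have "\<dots> \<le> real m powr (- 2 * \<epsilon>)"
    by (rule arith_bound[OF eps eta _ m1]) (use assms(4) in simp)
  finally have U: "measure ?M (\<Union>pq\<in>?I. B pq) \<le> real m powr (- 2 * \<epsilon>)" .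
  have c: "measure ?M E = 1 - measure ?M (\<Union>pq\<in>?I. B pq)"
    unfolding E_def by (rule P.prob_compl[OF Um])
  have d: "measure ?M E \<le> measure ?M {Z \<in> ?S. unique_maximizer m (noisy_matrix That Z) That}"
    by (rule P.finite_measure_mono[OF EG Gm])
  show ?thesis using U c d by linarith
qed

end
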